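(* Let $r\ge 2$ and $n\ge 3$. Let $W_n$ be the word over $\{H,v\}$ obtained from the Christoffel word of $\mathcal{C}_n$ by replacing every $E$ with $H$ and every $N$ with $v$ (this is the word encoding the pair consisting of all horizontal edges and no vertical edges of $\mathcal{C}_n$). Then $$w_q(W_n)=c_{n-1}+c_{n-2}-1.$$
   Context: Fix an integer $r\ge 2$. Define $c_1=0$, $c_2=1$, $c_n=rc_{n-1}-c_{n-2}$ for $n\ge 3$. For nonnegative integers $a,b$, the maximal Dyck path $\mathcal{P}(a,b)$ is the lattice path from $(0,0)$ to $(a,b)$ using unit north and east steps that never passes strictly above the line segment from $(0,0)$ to $(a,b)$ and is closest to that segment. For $n\ge 3$ let $\mathcal{C}_n=\mathcal{P}(c_{n-1},c_{n-2})$; its Christoffel word is the word over $\{E,N\}$ recording its steps in order ($E$ for east, $N$ for north). On the alphabet $A=\{h,v,H,V\}$ define $w_q$ on two-letter words by $w_q(hv)=w_q(Hv)=w_q(hV)=1$, $w_q(Hh)=w_q(vV)=r$, $w_q(VH)=r^2-1$, and $w_q(yx)=-w_q(xy)$ for all $x,y\in A$ (so $w_q(xx)=0$). For a word $W=W_1W_2\cdots W_\ell$ over $A$, set $w_q(W)=\sum_{1\le i<j\le \ell}w_q(W_iW_j)$. *)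

theory Defs
  imports Main
begin

text \<open>The sequence c_n (index 0 is an auxiliary value chosen so that the
recurrence also produces c_2 = 1; only c_n for n >= 1 is used).\<close>
fun cseq :: "int \<Rightarrow> nat \<Rightarrow> int" where
  "cseq r 0 = -1"
| "cseq r (Suc 0) = 0"
| "cseq r (Suc (Suc n)) = r * cseq r (Suc n) - cseq r n"

datatype step = E | N

definition xcoord :: "step list \<Rightarrow> nat" where
  "xcoord p = length (filter (\<lambda>s. s = E) p)"

definition ycoord :: "step list \<Rightarrow> nat" where
  "ycoord p = length (filter (\<lambda>s. s = N) p)"

text \<open>A lattice path from (0,0) to (a,b) never passing strictly above the
segment from (0,0) to (a,b): every lattice point (x,y) visited satisfies
a*y <= b*x (by convexity it suffices to check the visited lattice points).\<close>
definition dyck_path :: "nat \<Rightarrow> nat \<Rightarrow> step list \<Rightarrow> bool" where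
  "dyck_path a b p \<longleftrightarrow> xcoord p = a \<and> ycoord p = b \<and>
     (\<forall>k \<le> length p. a * ycoord (take k p) \<le> b * xcoord (take k p))"

definition maximal_dyck_path :: "nat \<Rightarrow> nat \<Rightarrow> step list \<Rightarrow> bool" where
  "maximal_dyck_path a b p \<longleftrightarrow> dyck_path a b p \<and>
     (\<forall>q. dyck_path a b q \<longrightarrow>
        (\<forall>k \<le> a + b. ycoord (take k q) \<le> ycoord (take k p)))"

definition christoffel :: "nat \<Rightarrow> nat \<Rightarrow> step list" where
  "christoffel a b = (THE p. maximal_dyck_path a b p)"

definition Cn_word :: "int \<Rightarrow> nat \<Rightarrow> step list" where
  "Cn_word r n = christoffel (nat (cseq r (n - 1))) (nat (cseq r (n - 2)))"

datatype letter = lh | lv | lH | lV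

fun wq_base :: "int \<Rightarrow> letter \<Rightarrow> letter \<Rightarrow> int" where
  "wq_base r lh lv = 1"
| "wq_base r lH lv = 1"
| "wq_base r lh lV = 1"
| "wq_base r lH lh = r"
| "wq_base r lv lV = r"
| "wq_base r lV lH = r^2 - 1"
| "wq_base r lv lh = -1"
| "wq_base r lv lH = -1"
| "wq_base r lV lh = -1"
| "wq_base r lh lH = -r"
| "wq_base r lV lv = -r"
| "wq_base r lH lV = -(r^2 - 1)"
| "wq_base r _ _ = 0"

definition wq :: "int \<Rightarrow> letter list \<Rightarrow> int" where
  "wq r W = (\<Sum>j < length W. \<Sum>i < j. wq_base r (W ! i) (W ! j))"

definition HV_of_step :: "step \<Rightarrow> letter" where
  "HV_of_step s = (if s = E then lH else lv)"

definition W_word :: "int \<Rightarrow> nat \<Rightarrow> letter list" where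
  "W_word r n = map HV_of_step (Cn_word r n)"

end

theory Submission
  imports Defs
begin

lemma cseq_props:
  assumes r: "r \<ge> 2"
  shows "0 \<le> cseq r (Suc k) \<and> cseq r (Suc k) \<le> cseq r (Suc (Suc k)) \<and>
         gcd (cseq r (Suc k)) (cseq r (Suc (Suc k))) = 1"
proof (induction k)
  case 0
  then show ?case by simp
next
  case (Suc k)
  let ?x = "cseq r (Suc k)" and ?y = "cseq r (Suc (Suc k))"
  have e: "cseq r (Suc (Suc (Suc k))) = r * ?y - ?x" by simp
  have "r * ?y \<ge> 2 * ?y" using Suc r by (intro mult_right_mono) auto
  then have a: "0 \<le> ?y \<and> ?y \<le> r * ?y - ?x" using Suc by linarith
  have "gcd ?y (r * ?y - ?x) = gcd ?y (- ?x)"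
    by (metis add.commute diff_conv_add_uminus gcd_add_mult mult.commute)
  also have "\<dots> = gcd ?x ?y" by (simp add: gcd.commute)
  finally show ?case using a Suc e by simp
qed

lemma xy_len: "xcoord p + ycoord p = length p"
proof (induction p)
  case (Cons s p) then show ?case by (cases s) (auto simp: xcoord_def ycoord_def)
qed (simp add: xcoord_def ycoord_def)

lemma ycoord_snoc: "ycoord (p @ [s]) = ycoord p + (if s = N then 1 else 0)"
  by (simp add: ycoord_def)

definition p0 :: "nat \<Rightarrow> nat \<Rightarrow> step list" where
  "p0 a b = map (\<lambda>k. if b*(k+1) div (a+b) = b*k div (a+b) then E else N) [0..<a+b]"

lemma p0_len: "length (p0 a b) = a + b" by (simp add: p0_def)

lemma p0_y: "k \<le> a + b \<Longrightarrow> ycoord (take k (p0 a b)) = b*k div (a+b)"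
proof (induction k)
  case 0
  then show ?case by (simp add: ycoord_def)
next
  case (Suc k)
  let ?m = "a+b"
  have t: "take (Suc k) (p0 a b) = take k (p0 a b) @ [p0 a b ! k]"
    using Suc.prems by (simp add: take_Suc_conv_app_nth p0_len)
  have nth: "p0 a b ! k = (if b*(k+1) div ?m = b*k div ?m then E else N)"
    using Suc.prems by (simp add: p0_def)
  have le1: "b*k div ?m \<le> b*(k+1) div ?m" by (simp add: div_le_mono)
  have "b*(k+1) div ?m \<le> (b*k + ?m) div ?m" by (intro div_le_mono) simp
  also have "\<dots> \<le> b*k div ?m + 1"
  proof -
    have "?m \<noteq> 0" using Suc.prems by linarith
    from div_add_self2[OF this, of "b*k"] show ?thesis by simp
  qed
  finally have le2: "b*(k+1) div ?m \<le> b*k div ?m + 1" .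
  show ?case using Suc le1 le2 unfolding t ycoord_snoc nth by auto
qed

lemma dyck_bound:
  assumes "dyck_path a b q" "k \<le> length q"
  shows "ycoord (take k q) \<le> b*k div (a+b)"
proof -
  have "a * ycoord (take k q) \<le> b * xcoord (take k q)" using assms unfolding dyck_path_def by auto
  moreover have "xcoord (take k q) + ycoord (take k q) = k" using xy_len[of "take k q"] assms(2) by simp
  moreover have "b * k = b * xcoord (take k q) + b * ycoord (take k q)"
    using calculation(2) by (metis add_mult_distrib2)
  ultimately have h: "(a+b) * ycoord (take k q) \<le> b * k"
    by (simp add: add_mult_distrib)
  show ?thesis
  proof (cases "a + b = 0")
    case True
    have "length q = 0" using xy_len[of q] assms(1) True unfolding dyck_path_def by simp
    then show ?thesis by (simp add: ycoord_def)
  next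
    case False
    have "ycoord (take k q) = ((a+b) * ycoord (take k q)) div (a+b)" using False by simp
    also have "\<dots> \<le> b*k div (a+b)" using h by (rule div_le_mono)
    finally show ?thesis .
  qed
qed

lemma dyck_len: "dyck_path a b q \<Longrightarrow> length q = a + b"
  using xy_len[of q] by (simp add: dyck_path_def)

lemma p0_dyck: assumes "a + b > 0" shows "dyck_path a b (p0 a b)"
proof -
  let ?m = "a+b"
  have y: "ycoord (p0 a b) = b" using p0_y[of "a+b" a b] assms by (simp add: p0_len)
  have x: "xcoord (p0 a b) = a" using xy_len[of "p0 a b"] y by (simp add: p0_len)
  have "a * ycoord (take k (p0 a b)) \<le> b * xcoord (take k (p0 a b))" if k: "k \<le> ?m" for k
  proof -
    have yk: "ycoord (take k (p0 a b)) = b*k div ?m" using p0_y k by simp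
    have xk: "xcoord (take k (p0 a b)) = k - b*k div ?m"
      using xy_len[of "take k (p0 a b)"] k by (simp add: p0_len yk)
    have "b*k div ?m \<le> (?m*k) div ?m" by (intro div_le_mono) simp
    also have "\<dots> = k" using assms by simp
    finally have "b*k div ?m \<le> k" .
    moreover have "?m * (b*k div ?m) \<le> b*k" by simp
    ultimately show ?thesis unfolding yk xk
      by (simp add: algebra_simps diff_mult_distrib2 le_diff_conv2)
  qed
  then show ?thesis unfolding dyck_path_def using x y by (simp add: p0_len)
qed

lemma eq_by_y:
  assumes "length p = length q" "\<forall>k \<le> length p. ycoord (take k p) = ycoord (take k q)"
  shows "p = q"
proof (rule nth_equalityI)
  show "length p = length q" by fact
  fix i assume i: "i < length p"
  have a: "ycoord (take (Suc i) p) = ycoord (take i p) + (if p!i = N then 1 else 0)"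
    using i by (simp add: take_Suc_conv_app_nth ycoord_snoc)
  have b: "ycoord (take (Suc i) q) = ycoord (take i q) + (if q!i = N then 1 else 0)"
    using i assms(1) by (simp add: take_Suc_conv_app_nth ycoord_snoc)
  have "ycoord (take (Suc i) p) = ycoord (take (Suc i) q)" "ycoord (take i p) = ycoord (take i q)"
    using assms(2) i by auto
  then show "p ! i = q ! i" using a b by (cases "p!i"; cases "q!i") auto
qed

lemma christoffel_p0: assumes "a + b > 0" shows "christoffel a b = p0 a b"
  unfolding christoffel_def
proof (rule the_equality)
  show "maximal_dyck_path a b (p0 a b)"
    unfolding maximal_dyck_path_def
  proof (intro conjI allI impI)
    show "dyck_path a b (p0 a b)" using p0_dyck[OF assms] .
    fix q k assume q: "dyck_path a b q" and k: "k \<le> a + b"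
    have "ycoord (take k q) \<le> b*k div (a+b)" using dyck_bound[OF q] k dyck_len[OF q] by simp
    then show "ycoord (take k q) \<le> ycoord (take k (p0 a b))" using p0_y[OF k] by simp
  qed
next
  fix p assume p: "maximal_dyck_path a b p"
  have pd: "dyck_path a b p" using p maximal_dyck_path_def by auto
  have lp: "length p = a + b" using dyck_len pd by simp
  show "p = p0 a b"
  proof (rule eq_by_y)
    show "length p = length (p0 a b)" using lp p0_len by simp
    show "\<forall>k\<le>length p. ycoord (take k p) = ycoord (take k (p0 a b))"
    proof (intro allI impI)
      fix k assume k: "k \<le> length p"
      have "ycoord (take k (p0 a b)) \<le> ycoord (take k p)"
        using p p0_dyck[OF assms] k lp unfolding maximal_dyck_path_def by auto
      moreover have "ycoord (take k p) \<le> b*k div (a+b)" using dyck_bound pd k by simp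
      ultimately show "ycoord (take k p) = ycoord (take k (p0 a b))" using p0_y k lp by simp
    qed
  qed
qed

lemma wq_snoc: "wq r (W @ [x]) = wq r W + (\<Sum>i<length W. wq_base r (W!i) x)"
proof -
  have "wq r (W @ [x]) = (\<Sum>j<length W. \<Sum>i<j. wq_base r ((W@[x]) ! i) ((W@[x]) ! j))
        + (\<Sum>i<length W. wq_base r ((W@[x]) ! i) x)"
    unfolding wq_def by (simp add: nth_append)
  also have "(\<Sum>j<length W. \<Sum>i<j. wq_base r ((W@[x]) ! i) ((W@[x]) ! j)) = wq r W"
    unfolding wq_def by (intro sum.cong refl) (simp add: nth_append)
  also have "(\<Sum>i<length W. wq_base r ((W@[x]) ! i) x) = (\<Sum>i<length W. wq_base r (W!i) x)"
    by (intro sum.cong refl) (simp add: nth_append)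
  finally show ?thesis .
qed

lemma sum_nth_list: "(\<Sum>i<length W. f (W!i)) = sum_list (map f W)"
  by (simp add: sum_list_sum_nth atLeast0LessThan)

lemma sumE: "sum_list (map (\<lambda>t. wq_base r (HV_of_step t) (HV_of_step E)) p) = - int (ycoord p)"
proof (induction p)
  case (Cons s p) then show ?case by (cases s) (auto simp: ycoord_def HV_of_step_def)
qed (simp add: ycoord_def)

lemma sumN: "sum_list (map (\<lambda>t. wq_base r (HV_of_step t) (HV_of_step N)) p) = int (xcoord p)"
proof (induction p)
  case (Cons s p) then show ?case by (cases s) (auto simp: xcoord_def HV_of_step_def)
qed (simp add: xcoord_def)

lemma wq_path: "wq r (map HV_of_step p) =
   (int (length p) - 1) * int (ycoord p) - 2 * (\<Sum>j<length p. int (ycoord (take j p)))"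
proof (induction p rule: rev_induct)
  case Nil
  then show ?case by (simp add: wq_def ycoord_def)
next
  case (snoc s p)
  have sw: "(\<Sum>i<length p. wq_base r (map HV_of_step p ! i) (HV_of_step s))
      = sum_list (map (\<lambda>t. wq_base r (HV_of_step t) (HV_of_step s)) p)"
    using sum_nth_list[where W="map HV_of_step p" and f="\<lambda>l. wq_base r l (HV_of_step s)"] by (simp add: comp_def)
  have ss: "(\<Sum>j<length (p@[s]). int (ycoord (take j (p@[s]))))
      = (\<Sum>j<length p. int (ycoord (take j p))) + int (ycoord p)"
    by (simp add: sum.lessThan_Suc)
  have xy: "int (xcoord p) + int (ycoord p) = int (length p)" using xy_len[of p] by linarith
  show ?case
  proof (cases s)
    case E
    show ?thesis using snoc.IH unfolding map_append list.map(1,2) wq_snoc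
      using sw ss sumE[of r p] E by (simp add: ycoord_snoc algebra_simps)
  next
    case N
    show ?thesis using snoc.IH unfolding map_append list.map(1,2) wq_snoc
      using sw ss sumN[of r p] N xy by (simp add: ycoord_snoc algebra_simps)
  qed
qed

lemma floor_pair:
  fixes b m :: int and j :: int
  assumes "coprime b m" "0 < j" "j < m"
  shows "b*j div m + b*(m-j) div m = b - 1"
proof -
  define q where "q = b*j div m"
  define rr where "rr = b*j mod m"
  have m0: "m > 0" using assms by simp
  have bj: "b*j = q*m + rr" unfolding q_def rr_def by simp
  have rr0: "rr \<noteq> 0"
  proof
    assume "rr = 0"
    then have "m dvd b*j" unfolding rr_def by auto
    then have "m dvd j" using assms(1)
      by (metis coprime_commute coprime_dvd_mult_right_iff)
    then show False using assms(2,3) zdvd_imp_le by fastforce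
  qed
  have rrb: "0 \<le> rr" "rr < m" unfolding rr_def using m0 by auto
  have "b*(m-j) = (b-q-1)*m + (m-rr)" using bj by (simp add: algebra_simps)
  then have "b*(m-j) div m = (b-q-1) + (m - rr) div m" using m0 by simp
  also have "(m - rr) div m = 0" using rrb rr0 by (intro div_pos_pos_trivial) auto
  finally show ?thesis unfolding q_def by simp
qed

lemma floor_sum:
  fixes b m :: nat
  assumes "coprime b m" "0 < m"
  shows "2 * (\<Sum>j<m. int (b*j div m)) = (int m - 1) * (int b - 1)"
proof (cases "m = 1")
  case True then show ?thesis by simp
next
  case False
  then have m2: "m \<ge> 2" using assms by simp
  have cb: "coprime (int b) (int m)" using assms by simp
  have b1: "b \<ge> 1" using assms m2 by (cases b) auto
  define f where "f j = int b * int j div int m" for j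
  have fj: "int (b*j div m) = f j" for j unfolding f_def by (simp add: zdiv_int)
  have "(\<Sum>j<m. int (b*j div m)) = (\<Sum>j\<in>{1..<m}. f j)"
  proof -
    have "{..<m} = insert 0 {1..<m}" using assms by auto
    then show ?thesis by (simp add: fj f_def)
  qed
  moreover have "(\<Sum>j\<in>{1..<m}. f j) = (\<Sum>j\<in>{1..<m}. f (m - j))"
    by (rule sum.reindex_bij_witness[of _ "\<lambda>j. m - j" "\<lambda>j. m - j"]) auto
  moreover have "(\<Sum>j\<in>{1..<m}. f j + f (m - j)) = (\<Sum>j\<in>{1..<m}. int b - 1)"
  proof (intro sum.cong refl)
    fix j assume j: "j \<in> {1..<m}"
    have "int b * int j div int m + int b * (int m - int j) div int m = int b - 1"
      using floor_pair[OF cb, of "int j"] j by auto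
    then show "f j + f (m - j) = int b - 1" unfolding f_def using j by (simp add: of_nat_diff)
  qed
  ultimately show ?thesis using m2 by (simp add: sum.distrib of_nat_diff algebra_simps)
qed

theorem mainTheorem4:
  fixes r :: int and n :: nat
  assumes "r \<ge> 2" and "n \<ge> 3"
  shows "wq r (W_word r n) = cseq r (n - 1) + cseq r (n - 2) - 1"
proof -
  define k where "k = n - 3"
  have k: "n = Suc (Suc (Suc k))" using assms(2) unfolding k_def by simp
  have n1: "n - 1 = Suc (Suc k)" and n2: "n - 2 = Suc k" using k by auto
  define A where "A = cseq r (Suc (Suc k))"
  define B where "B = cseq r (Suc k)"
  have P: "0 \<le> B" "B \<le> A" "gcd B A = 1"
    using cseq_props[OF assms(1), of k] unfolding A_def B_def by auto
  define a where "a = nat A"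
  define b where "b = nat B"
  have Aa: "A = int a" and Bb: "B = int b" using P unfolding a_def b_def by auto
  have a0: "a > 0"
  proof (rule ccontr)
    assume "\<not> a > 0"
    then have "A = 0" "B = 0" using Aa Bb P by auto
    then show False using P(3) by simp
  qed
  define m where "m = a + b"
  have m0: "m > 0" using a0 m_def by simp
  have cop: "coprime b m"
  proof -
    have "gcd (int b) (int a) = 1" using P(3) Aa Bb by simp
    then have "coprime (int b) (int a)" by (simp add: coprime_iff_gcd_eq_1)
    then have "coprime b a" by simp
    then show ?thesis unfolding m_def coprime_iff_gcd_eq_1
      by (metis add.commute gcd_add2)
  qed
  have W: "W_word r n = map HV_of_step (p0 a b)"
  proof -
    have "Cn_word r n = christoffel a b"
      unfolding Cn_word_def n1 n2 a_def b_def A_def B_def by simp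
    then show ?thesis unfolding W_word_def using christoffel_p0[OF m0[unfolded m_def]] by simp
  qed
  have yb: "ycoord (p0 a b) = b" using p0_y[of "a+b" a b] m0 m_def by (simp add: p0_len)
  have sy: "(\<Sum>j<length (p0 a b). int (ycoord (take j (p0 a b)))) = (\<Sum>j<m. int (b*j div m))"
    unfolding p0_len m_def[symmetric]
    by (intro sum.cong refl) (simp add: p0_y m_def)
  have "wq r (W_word r n) = (int m - 1) * int b - 2 * (\<Sum>j<m. int (b*j div m))"
    unfolding W wq_path sy yb by (simp add: p0_len m_def)
  also have "\<dots> = (int m - 1) * int b - (int m - 1) * (int b - 1)"
    using floor_sum[OF cop m0] by simp
  also have "\<dots> = int a + int b - 1" by (simp add: m_def algebra_simps)
  finally show ?thesis using Aa Bb unfolding n1 n2 A_def B_def by simp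
qed

end
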